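(* Let $t\geq 0$ be an integer. There exists a partition $\mathcal N_t$ of the set $\mathbb N$ of nonnegative integers such that (i) each class $N\in\mathcal N_t$ is a residue class modulo $2^r$ for some $r\ge 0$, i.e. of the form $a+2^r\mathbb N$ with $0\leq a<2^r$; (ii) for every integer $k$ the set $B(k,t)=\{n\in \mathbb N:s(n+t)-s(n)=k\}$ is a finite (possibly empty) union of classes of $\mathcal N_t$. In particular, each set $B(k,t)$ has an asymptotic density $\delta(k,t)$. Moreover, for all $k\in\mathbb{Z}$ and all integers $t\geq 1$ these densities satisfy \[ \delta(k,1)=\begin{cases}2^{k-2},&k\leq 1,\\0&\text{otherwise,}\end{cases}\qquad \delta(k,2t)=\delta(k,t),\qquad \delta(k,2t+1)=\tfrac 12 \delta(k-1,t)+\tfrac 12\delta(k+1,t+1). \]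
   Context: For a nonnegative integer $n$, $s(n)$ denotes the binary sum of digits of $n$ (the number of digits $1$ in its base-$2$ expansion). *)

theory Defs
  imports Complex_Main "HOL-Library.Disjoint_Sets"
begin

fun bsum :: "nat \<Rightarrow> nat" where
  "bsum n = (if n = 0 then 0 else n mod 2 + bsum (n div 2))"

declare bsum.simps[simp del]

definition B :: "int \<Rightarrow> nat \<Rightarrow> nat set" where
  "B k t = {n. int (bsum (n + t)) - int (bsum n) = k}"

definition is_dyadic_class :: "nat set \<Rightarrow> bool" where
  "is_dyadic_class N \<longleftrightarrow> (\<exists>r a. a < 2 ^ r \<and> N = (\<lambda>m. a + 2 ^ r * m) ` UNIV)"

definition has_density :: "nat set \<Rightarrow> real \<Rightarrow> bool" where
  "has_density A d \<longleftrightarrow> (\<lambda>N. real (card (A \<inter> {..<N})) / real N) \<longlonglongrightarrow> d"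

end

theory Submission
  imports Defs "HOL-Real_Asymp.Real_Asymp"
begin

lemma bsum_0[simp]: "bsum 0 = 0" by (subst bsum.simps) simp

lemma bsum_rec: "bsum n = n mod 2 + bsum (n div 2)"
  by (cases "n = 0") (simp, subst bsum.simps, simp)

lemma bsum_double[simp]: "bsum (2*m) = bsum m"
  using bsum_rec[of "2*m"] by simp

lemma bsum_double1[simp]: "bsum (2*m+1) = bsum m + 1"
  using bsum_rec[of "2*m+1"] by simp

lemma bsum_double1'[simp]: "bsum (Suc (2*m)) = bsum m + 1"
  using bsum_double1[of m] by simp

lemma bsum_mod2: "(b::nat) < 2 \<Longrightarrow> bsum (b + 2*X) = b + bsum X"
proof -
  assume "b < 2"
  then have "b = 0 \<or> b = 1" by linarith
  then show ?thesis by auto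
qed

lemma bsum_add_pow: "a < 2^L \<Longrightarrow> bsum (a + 2^L * q) = bsum a + bsum q"
proof (induction L arbitrary: a)
  case 0 then show ?case by simp
next
  case (Suc L)
  have e: "a + 2^Suc L * q = a mod 2 + 2 * (a div 2 + 2^L * q)" by simp
  have "bsum (a + 2^Suc L * q) = a mod 2 + bsum (a div 2 + 2^L * q)"
    using arg_cong[OF e, of bsum] bsum_mod2[of "a mod 2" "a div 2 + 2^L * q"] by simp
  also have "\<dots> = a mod 2 + bsum (a div 2) + bsum q" using Suc by simp
  also have "\<dots> = bsum a + bsum q" using bsum_rec[of a] by simp
  finally show ?case .
qed

lemma bsum_pow_minus1: "bsum (2^j - 1) = j"
proof (induction j)
  case 0 then show ?case by simp
next
  case (Suc j)
  have "(2::nat)^Suc j - 1 = 2 * (2^j - 1) + 1" proof -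
    have "(1::nat) \<le> 2^j" by simp
    moreover have "(2::nat)^Suc j = 2 * 2^j" by simp
    ultimately show ?thesis by linarith
  qed
  then show ?case using Suc by simp
qed

lemma bsum_le: "bsum n \<le> n"
proof (induction n rule: less_induct)
  case (less n)
  show ?case
  proof (cases "n = 0")
    case False
    then have "bsum (n div 2) \<le> n div 2" using less by simp
    then show ?thesis using bsum_rec[of n] by linarith
  qed simp
qed

fun v2 :: "nat \<Rightarrow> nat" where
  "v2 x = (if x = 0 \<or> odd x then 0 else Suc (v2 (x div 2)))"

declare v2.simps[simp del]

lemma v2_decomp: "x > 0 \<Longrightarrow> \<exists>m. x = 2^(v2 x) * (2*m+1)"
proof (induction x rule: less_induct)
  case (less x)
  show ?case
  proof (cases "odd x")
    case True
    then obtain m where "x = 2*m+1" by (rule oddE)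
    moreover have "v2 x = 0" using True by (subst v2.simps) simp
    ultimately show ?thesis by auto
  next
    case False
    then have "x div 2 > 0" "x div 2 < x" using less.prems by auto
    then obtain m where m: "x div 2 = 2^(v2 (x div 2)) * (2*m+1)" using less.IH by blast
    have "x = 2 * (x div 2)" using False by simp
    have "v2 x = Suc (v2 (x div 2))" using False less.prems by (subst v2.simps) simp
    then have "x = 2^(v2 x) * (2*m+1)" using \<open>x = 2 * (x div 2)\<close> m by (simp add: mult.assoc)
    then show ?thesis by blast
  qed
qed

lemma v2_double: "X > 0 \<Longrightarrow> v2 (2*X) = Suc (v2 X)"
  by (subst v2.simps) simp

lemma v2_eq: "v2 (2^j * (2*m+1)) = j"
proof (induction j)
  case 0 then show ?case by (subst v2.simps) simp
next
  case (Suc j)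
  have "2^Suc j * (2*m+1) = 2 * (2^j * (2*m+1))" by simp
  then show ?case using Suc v2_double[of "2^j * (2*m+1)"] by simp
qed


definition ilv :: "nat set \<Rightarrow> nat set \<Rightarrow> nat set" where
  "ilv A C = {n. (even n \<and> n div 2 \<in> A) \<or> (odd n \<and> n div 2 \<in> C)}"

lemma ilv_set: "ilv A C \<inter> {..<N} =
   (\<lambda>m. 2*m) ` (A \<inter> {..<(N+1) div 2}) \<union> (\<lambda>m. 2*m+1) ` (C \<inter> {..<N div 2})"
proof (intro equalityI subsetI)
  fix n assume "n \<in> ilv A C \<inter> {..<N}"
  then have n: "n < N" "(even n \<and> n div 2 \<in> A) \<or> (odd n \<and> n div 2 \<in> C)"
    by (auto simp: ilv_def)
  show "n \<in> (\<lambda>m. 2*m) ` (A \<inter> {..<(N+1) div 2}) \<union> (\<lambda>m. 2*m+1) ` (C \<inter> {..<N div 2})"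
  proof (cases "even n")
    case True
    then have "n = 2 * (n div 2)" "n div 2 < (N+1) div 2" using n by auto
    then show ?thesis using n True by (metis (no_types, lifting) IntI UnI1 image_eqI lessThan_iff)
  next
    case False
    then have "n = 2 * (n div 2) + 1" "n div 2 < N div 2" using n by (auto, presburger)
    then show ?thesis using n False by (metis (no_types, lifting) IntI UnI2 image_eqI lessThan_iff)
  qed
next
  fix n assume "n \<in> (\<lambda>m. 2*m) ` (A \<inter> {..<(N+1) div 2}) \<union> (\<lambda>m. 2*m+1) ` (C \<inter> {..<N div 2})"
  then show "n \<in> ilv A C \<inter> {..<N}"
    by (auto simp: ilv_def)
qed

lemma card_ilv: "card (ilv A C \<inter> {..<N}) = card (A \<inter> {..<(N+1) div 2}) + card (C \<inter> {..<N div 2})"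
proof -
  have "card (ilv A C \<inter> {..<N}) = card ((\<lambda>m. 2*m) ` (A \<inter> {..<(N+1) div 2})) + card ((\<lambda>m. 2*m+1) ` (C \<inter> {..<N div 2}))"
    unfolding ilv_set by (rule card_Un_disjoint) (auto, presburger)
  also have "\<dots> = card (A \<inter> {..<(N+1) div 2}) + card (C \<inter> {..<N div 2})"
    by (subst card_image, simp add: inj_on_def)+ simp
  finally show ?thesis .
qed

lemma half_lim1: "(\<lambda>N. real ((N+1) div 2) / real N) \<longlonglongrightarrow> 1/2"
proof (rule tendsto_sandwich[of "\<lambda>N. (real N - 1) / (2 * real N)" _ _ "\<lambda>N. (real N + 1) / (2 * real N)"])
  show "\<forall>\<^sub>F N in sequentially. (real N - 1) / (2 * real N) \<le> real ((N+1) div 2) / real N"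
    using eventually_gt_at_top[of "0::nat"]
  proof eventually_elim
    case (elim N)
    have "N \<le> 2*((N+1) div 2)+1" by presburger
    then have "real N \<le> real (2*((N+1) div 2)+1)" by (rule of_nat_mono)
    then have "(real N - 1)/2 \<le> real ((N+1) div 2)" by simp
    then have "((real N - 1)/2) / real N \<le> real ((N+1) div 2) / real N" by (rule divide_right_mono) simp
    then show ?case by simp
  qed
  show "\<forall>\<^sub>F N in sequentially. real ((N+1) div 2) / real N \<le> (real N + 1) / (2 * real N)"
    using eventually_gt_at_top[of "0::nat"]
  proof eventually_elim
    case (elim N)
    have "2*((N+1) div 2) \<le> N+1" by presburger
    then have "real (2*((N+1) div 2)) \<le> real (N+1)" by (rule of_nat_mono)
    then have "real ((N+1) div 2) \<le> (real N + 1)/2" by simp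
    then have "real ((N+1) div 2) / real N \<le> ((real N + 1)/2) / real N" by (rule divide_right_mono) simp
    then show ?case by simp
  qed
  show "(\<lambda>N. (real N - 1) / (2 * real N)) \<longlonglongrightarrow> 1/2" by real_asymp
  show "(\<lambda>N. (real N + 1) / (2 * real N)) \<longlonglongrightarrow> 1/2" by real_asymp
qed

lemma half_lim2: "(\<lambda>N. real (N div 2) / real N) \<longlonglongrightarrow> 1/2"
proof (rule tendsto_sandwich[of "\<lambda>N. (real N - 1) / (2 * real N)" _ _ "\<lambda>N. (real N + 1) / (2 * real N)"])
  show "\<forall>\<^sub>F N in sequentially. (real N - 1) / (2 * real N) \<le> real (N div 2) / real N"
    using eventually_gt_at_top[of "0::nat"]
  proof eventually_elim
    case (elim N)
    have "N \<le> 2*(N div 2)+1" by presburger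
    then have "real N \<le> real (2*(N div 2)+1)" by (rule of_nat_mono)
    then have "(real N - 1)/2 \<le> real (N div 2)" by simp
    then have "((real N - 1)/2) / real N \<le> real (N div 2) / real N" by (rule divide_right_mono) simp
    then show ?case by simp
  qed
  show "\<forall>\<^sub>F N in sequentially. real (N div 2) / real N \<le> (real N + 1) / (2 * real N)"
    using eventually_gt_at_top[of "0::nat"]
  proof eventually_elim
    case (elim N)
    have "2*(N div 2) \<le> N+1" by presburger
    then have "real (2*(N div 2)) \<le> real (N+1)" by (rule of_nat_mono)
    then have "real (N div 2) \<le> (real N + 1)/2" by simp
    then have "real (N div 2) / real N \<le> ((real N + 1)/2) / real N" by (rule divide_right_mono) simp
    then show ?case by simp
  qed
  show "(\<lambda>N. (real N - 1) / (2 * real N)) \<longlonglongrightarrow> 1/2" by real_asymp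
  show "(\<lambda>N. (real N + 1) / (2 * real N)) \<longlonglongrightarrow> 1/2" by real_asymp
qed

lemma comp_density:
  assumes "has_density A a" and h: "filterlim h at_top sequentially"
    and hl: "(\<lambda>N. real (h N) / real N) \<longlonglongrightarrow> 1/2"
  shows "(\<lambda>N. real (card (A \<inter> {..<h N})) / real N) \<longlonglongrightarrow> a / 2"
proof -
  have f: "(\<lambda>N. real (card (A \<inter> {..<h N})) / real (h N)) \<longlonglongrightarrow> a"
    using filterlim_compose[OF assms(1)[unfolded has_density_def] h] by (simp add: o_def)
  have "(\<lambda>N. real (card (A \<inter> {..<h N})) / real (h N) * (real (h N) / real N)) \<longlonglongrightarrow> a * (1/2)"
    by (rule tendsto_mult[OF f hl])
  moreover have "(\<lambda>N. real (card (A \<inter> {..<h N})) / real (h N) * (real (h N) / real N)) = (\<lambda>N. real (card (A \<inter> {..<h N})) / real N)"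
    by (rule ext, case_tac "h N = 0") auto
  ultimately show ?thesis by simp
qed

lemma density_ilv:
  assumes "has_density A a" "has_density C c"
  shows "has_density (ilv A C) ((a + c) / 2)"
proof -
  have h1: "filterlim (\<lambda>N::nat. (N+1) div 2) at_top sequentially"
    unfolding filterlim_at_top
  proof
    fix Z :: nat show "\<forall>\<^sub>F N in sequentially. Z \<le> (N+1) div 2"
      using eventually_ge_at_top[of "2*Z"] by eventually_elim linarith
  qed
  have h2: "filterlim (\<lambda>N::nat. N div 2) at_top sequentially"
    unfolding filterlim_at_top
  proof
    fix Z :: nat show "\<forall>\<^sub>F N in sequentially. Z \<le> N div 2"
      using eventually_ge_at_top[of "2*Z"] by eventually_elim linarith
  qed
  have "(\<lambda>N. real (card (A \<inter> {..<(N+1) div 2})) / real N + real (card (C \<inter> {..<N div 2})) / real N) \<longlonglongrightarrow> a/2 + c/2"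
    by (rule tendsto_add[OF comp_density[OF assms(1) h1 half_lim1] comp_density[OF assms(2) h2 half_lim2]])
  then show ?thesis unfolding has_density_def card_ilv by (simp add: add_divide_distrib)
qed

lemma density_empty: "has_density {} 0"
  unfolding has_density_def by simp

lemma density_UNIV: "has_density UNIV 1"
  unfolding has_density_def
proof (rule Lim_transform_eventually[of "\<lambda>_. 1"])
  show "(\<lambda>_. 1::real) \<longlonglongrightarrow> 1" by simp
  show "\<forall>\<^sub>F N in sequentially. 1 = real (card (UNIV \<inter> {..<N})) / real N"
    using eventually_gt_at_top[of "0::nat"] by eventually_elim simp
qed


lemma dyadic_set: "range (\<lambda>m. b + 2^Suc r*m) =
   ilv (if even b then range (\<lambda>m. b div 2 + 2^r*m) else {}) (if odd b then range (\<lambda>m. b div 2 + 2^r*m) else {})"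
proof (intro equalityI subsetI)
  fix n assume "n \<in> range (\<lambda>m. b + 2^Suc r*m)"
  then obtain m where m: "n = b + 2^Suc r*m" by auto
  have e: "n = b mod 2 + 2 * (b div 2 + 2^r*m)" using m by simp
  then have "n div 2 = b div 2 + 2^r*m" "even n = even b" by auto
  then show "n \<in> ilv (if even b then range (\<lambda>m. b div 2 + 2^r*m) else {}) (if odd b then range (\<lambda>m. b div 2 + 2^r*m) else {})"
    unfolding ilv_def by auto
next
  fix n assume "n \<in> ilv (if even b then range (\<lambda>m. b div 2 + 2^r*m) else {}) (if odd b then range (\<lambda>m. b div 2 + 2^r*m) else {})"
  then obtain m where m: "n div 2 = b div 2 + 2^r*m" and p: "even n = even b"
    unfolding ilv_def by (auto split: if_splits)
  have "n mod 2 = b mod 2" using p by (simp add: even_iff_mod_2_eq_zero) presburger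
  then have "n = b + 2^Suc r*m"
    using m div_mult_mod_eq[of n 2] div_mult_mod_eq[of b 2] by (simp add: algebra_simps)
  then show "n \<in> range (\<lambda>m. b + 2^Suc r*m)" by auto
qed

lemma dyadic_density: "b < 2^r \<Longrightarrow> has_density (range (\<lambda>m. b + 2^r*m)) (1/2^r)"
proof (induction r arbitrary: b)
  case 0
  then have "range (\<lambda>m. b + 2^0*m) = UNIV" by auto
  then show ?case using density_UNIV by simp
next
  case (Suc r)
  have b2: "b div 2 < 2^r" using Suc.prems by simp
  have d: "has_density (range (\<lambda>m. b div 2 + 2^r*m)) (1/2^r)" using Suc.IH[OF b2] .
  show ?case
  proof (cases "even b")
    case True
    have "has_density (ilv (range (\<lambda>m. b div 2 + 2^r*m)) {}) ((1/2^r + 0)/2)"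
      by (rule density_ilv[OF d density_empty])
    then show ?thesis unfolding dyadic_set using True by (simp add: mult.commute)
  next
    case False
    have "has_density (ilv {} (range (\<lambda>m. b div 2 + 2^r*m))) ((0 + 1/2^r)/2)"
      by (rule density_ilv[OF density_empty d])
    then show ?thesis unfolding dyadic_set using False by (simp add: mult.commute)
  qed
qed

lemma v2_class:
  assumes a: "a < 2^L"
  shows "{n. n mod 2^L = a \<and> v2 (n div 2^L + 1) = j} = range (\<lambda>m. (a + 2^L*(2^j-1)) + 2^(L+j+1)*m)"
proof (intro equalityI subsetI)
  fix n assume "n \<in> {n. n mod 2^L = a \<and> v2 (n div 2^L + 1) = j}"
  then have n: "n mod 2^L = a" "v2 (n div 2^L + 1) = j" by auto
  define q where "q = n div 2^L"
  obtain m where m: "q + 1 = 2^j * (2*m+1)" using v2_decomp[of "q+1"] n(2) q_def by auto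
  have p: "(2::nat)^j \<ge> 1" by simp
  have "q + 1 = 2*(2^j*m) + 2^j" using m by (simp add: algebra_simps)
  then have "q = (2^j - 1) + 2*(2^j*m)" using p by linarith
  then have "n = a + 2^L*((2^j - 1) + 2*(2^j*m))"
    using div_mult_mod_eq[of n "2^L"] n(1) q_def by (simp add: algebra_simps)
  also have "\<dots> = (a + 2^L*(2^j-1)) + 2^L*(2*(2^j*m))" by (simp only: distrib_left add.assoc)
  also have "2^L*(2*(2^j*m)) = (2::nat)^(L+j+1)*m" by (simp add: power_add algebra_simps)
  finally show "n \<in> range (\<lambda>m. (a + 2^L*(2^j-1)) + 2^(L+j+1)*m)" by auto
next
  fix n assume "n \<in> range (\<lambda>m. (a + 2^L*(2^j-1)) + 2^(L+j+1)*m)"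
  then obtain m where m: "n = (a + 2^L*(2^j-1)) + 2^(L+j+1)*m" by auto
  define Q where "Q = (2^j - 1) + 2^(j+1)*m"
  have e1: "a + 2^L*Q = (a + 2^L*(2^j-1)) + 2^L*(2^(j+1)*m)" by (simp only: Q_def distrib_left add.assoc)
  have e2: "2^L*(2^(j+1)*m) = (2::nat)^(L+j+1)*m" by (simp add: power_add algebra_simps)
  have "n = a + 2^L*Q" by (simp only: m e1 e2)
  then have "n mod 2^L = a" "n div 2^L = Q" using a by auto
  moreover have "Q + 1 = 2^j*(2*m+1)"
  proof -
    have p: "(2::nat)^j \<ge> 1" by simp
    have "Q + 1 = 2^j + 2*(2^j*m)" unfolding Q_def using p by simp
    then show ?thesis by (simp add: algebra_simps)
  qed
  ultimately show "n \<in> {n. n mod 2^L = a \<and> v2 (n div 2^L + 1) = j}" using v2_eq by simp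
qed

lemma class_bound: "a < 2^L \<Longrightarrow> a + 2^L*(2^j-1) < (2::nat)^(L+j+1)"
proof -
  assume a: "a < 2^L"
  have p: "(2::nat)^j \<ge> 1" by simp
  have "2^L*(2^j-1) + 2^L = (2::nat)^L*2^j"
    using p by (simp add: algebra_simps right_diff_distrib')
  moreover have "(2::nat)^L*2^j < 2^(L+j+1)" by (simp add: power_add)
  ultimately show ?thesis using a by linarith
qed


lemma B_zero: "B k 0 = (if k = 0 then UNIV else {})"
  unfolding B_def by auto

lemma B_even: "B k (2*t) = ilv (B k t) (B k t)"
proof -
  have "n \<in> B k (2*t) \<longleftrightarrow> n \<in> ilv (B k t) (B k t)" for n
  proof (cases "even n")
    case True
    then obtain m where m: "n = 2*m" by auto
    have "n + 2*t = 2*(m+t)" using m by simp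
    then have h1: "bsum (n + 2*t) = bsum (m+t)" by (metis bsum_double)
    have h2: "bsum n = bsum m" using m by simp
    have h3: "n div 2 = m" using m by simp
    show ?thesis unfolding B_def ilv_def using True h1 h2 h3 by simp
  next
    case False
    then obtain m where m: "n = 2*m+1" using oddE by blast
    have "n + 2*t = 2*(m+t)+1" using m by simp
    then have h1: "bsum (n + 2*t) = bsum (m+t) + 1" by (metis bsum_double1)
    have h2: "bsum n = bsum m + 1" using m by simp
    have h3: "n div 2 = m" using m by simp
    show ?thesis unfolding B_def ilv_def using False h1 h2 h3 by simp
  qed
  then show ?thesis by blast
qed

lemma B_odd: "B k (2*t+1) = ilv (B (k-1) t) (B (k+1) (t+1))"
proof -
  have "n \<in> B k (2*t+1) \<longleftrightarrow> n \<in> ilv (B (k-1) t) (B (k+1) (t+1))" for n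
  proof (cases "even n")
    case True
    then obtain m where m: "n = 2*m" by auto
    have "n + (2*t+1) = 2*(m+t)+1" using m by simp
    then have h1: "bsum (n + (2*t+1)) = bsum (m+t) + 1" by (metis bsum_double1)
    have h2: "bsum n = bsum m" using m by simp
    have h3: "n div 2 = m" using m by simp
    show ?thesis unfolding B_def ilv_def using True h1 h2 h3 by auto
  next
    case False
    then obtain m where m: "n = 2*m+1" using oddE by blast
    have "n + (2*t+1) = 2*(m+t+1)" using m by simp
    then have h1: "bsum (n + (2*t+1)) = bsum (m+t+1)" by (metis bsum_double)
    have h2: "bsum n = bsum m + 1" using m by simp
    have h3: "n div 2 = m" using m by simp
    show ?thesis unfolding B_def ilv_def using False h1 h2 h3 by auto
  qed
  then show ?thesis by blast
qed

lemma bsum_split_v2: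
  assumes "x + 1 = 2^j * (2*m+1)"
  shows "bsum x = j + bsum m" "bsum (x+1) = bsum m + 1"
proof -
  have p: "(2::nat)^j \<ge> 1" by simp
  have "x + 1 = 2*(2^j*m) + 2^j" using assms by (simp add: algebra_simps)
  then have "x = (2^j - 1) + 2^j*(2*m)" using p by simp
  then have "bsum x = bsum (2^j - 1) + bsum (2*m)" using bsum_add_pow[of "2^j-1" j "2*m"] by simp
  then show "bsum x = j + bsum m" using bsum_pow_minus1[of j] by simp
  have "bsum (x+1) = bsum (0 + 2^j*(2*m+1))" using assms by simp
  also have "\<dots> = bsum m + 1" using bsum_add_pow[of 0 j "2*m+1"] by simp
  finally show "bsum (x+1) = bsum m + 1" .
qed

lemma B_one: "B k 1 = {n. int (v2 (n+1)) = 1 - k}"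
proof -
  have "int (bsum (n + 1)) - int (bsum n) = 1 - int (v2 (n+1))" for n
  proof -
    obtain m where "n + 1 = 2^(v2 (n+1)) * (2*m+1)" using v2_decomp[of "n+1"] by auto
    from bsum_split_v2[OF this] show ?thesis by simp
  qed
  then show ?thesis unfolding B_def by auto
qed

lemma B_one_density: "has_density (B k 1) (if k \<le> 1 then 2 powr (real_of_int k - 2) else 0)"
proof (cases "k \<le> 1")
  case True
  define j where "j = nat (1 - k)"
  have "B k 1 = {n. v2 (n+1) = j}"
    unfolding B_one
  proof (rule Collect_cong)
    fix n
    show "int (v2 (n+1)) = 1 - k \<longleftrightarrow> v2 (n+1) = j" unfolding j_def using True by linarith
  qed
  also have "\<dots> = {n. n mod 2^0 = 0 \<and> v2 (n div 2^0 + 1) = j}" by simp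
  also have "\<dots> = range (\<lambda>m. (0 + 2^0*(2^j-1)) + 2^(0+j+1)*m)"
    by (rule v2_class) simp
  finally have e: "B k 1 = range (\<lambda>m. (0 + 2^0*(2^j-1)) + 2^(0+j+1)*m)" .
  have "has_density (B k 1) (1/2^(0+j+1))" unfolding e
    by (rule dyadic_density, rule class_bound) simp
  moreover have "(1::real)/2^(0+j+1) = 2 powr (real_of_int k - 2)"
  proof -
    have "real_of_int k - 2 = - real (j+1)" unfolding j_def using True by simp
    then have A: "2 powr (real_of_int k - 2) = 2 powr (- real (j+1))" by (rule arg_cong)
    have B: "2 powr (- real (j+1)) = inverse (2 powr real (j+1))" by (rule powr_minus)
    have C: "2 powr real (j+1) = (2::real)^(j+1)" by (rule powr_realpow) simp
    have D: "(1::real)/2^(0+j+1) = inverse (2^(j+1))" by (simp only: add_0 divide_inverse mult_1)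
    show ?thesis by (simp only: A B C D)
  qed
  ultimately show ?thesis using True by simp
next
  case False
  have "B k 1 = {}" unfolding B_one
  proof (intro equalityI subsetI)
    fix n assume "n \<in> {n. int (v2 (n+1)) = 1 - k}"
    then have "int (v2 (n+1)) = 1 - k" by simp
    then show "n \<in> {}" using False by linarith
  qed simp
  then show ?thesis using False density_empty by simp
qed

lemma B_density_exists: "\<exists>d. has_density (B k t) d"
proof (induction t arbitrary: k rule: less_induct)
  case (less t)
  show ?case
  proof (cases "t = 0")
    case True
    then show ?thesis using density_UNIV density_empty B_zero[of k] by (cases "k = 0") auto
  next
    case t0: False
    show ?thesis
    proof (cases "t = 1")
      case True then show ?thesis using B_one_density by blast
    next
      case t1: False
      show ?thesis
      proof (cases "even t")
        case True
        then obtain s where s: "t = 2*s" by auto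
        then have "s < t" using t0 by simp
        then obtain d where "has_density (B k s) d" using less by blast
        then show ?thesis unfolding s B_even using density_ilv by blast
      next
        case False
        then obtain s where s: "t = 2*s+1" using oddE by blast
        then have "s < t" "s + 1 < t" using t1 by auto
        then obtain d1 d2 where "has_density (B (k-1) s) d1" "has_density (B (k+1) (s+1)) d2"
          using less by blast
        then show ?thesis unfolding s B_odd using density_ilv by blast
      qed
    qed
  qed
qed

lemma density_unique: "has_density A a \<Longrightarrow> has_density A b \<Longrightarrow> a = b"
  unfolding has_density_def using LIMSEQ_unique by blast

lemma part2: "\<exists>\<delta> :: int \<Rightarrow> nat \<Rightarrow> real.
            (\<forall>k t. has_density (B k t) (\<delta> k t))
          \<and> (\<forall>k. \<delta> k 1 = (if k \<le> 1 then 2 powr (real_of_int k - 2) else 0))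
          \<and> (\<forall>k t. t \<ge> 1 \<longrightarrow> \<delta> k (2 * t) = \<delta> k t)
          \<and> (\<forall>k t. t \<ge> 1 \<longrightarrow>
                \<delta> k (2 * t + 1) = 1/2 * \<delta> (k - 1) t + 1/2 * \<delta> (k + 1) (t + 1))"
proof -
  define \<delta> where "\<delta> k t = (SOME d. has_density (B k t) d)" for k t
  have D: "has_density (B k t) (\<delta> k t)" for k t
    unfolding \<delta>_def using B_density_exists by (rule someI_ex)
  show ?thesis
  proof (intro exI conjI allI impI)
    show "has_density (B k t) (\<delta> k t)" for k t by (rule D)
    show "\<delta> k 1 = (if k \<le> 1 then 2 powr (real_of_int k - 2) else 0)" for k
      using density_unique[OF D B_one_density] .
    show "\<delta> k (2 * t) = \<delta> k t" for k t
    proof -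
      have "has_density (B k (2*t)) ((\<delta> k t + \<delta> k t)/2)"
        unfolding B_even by (rule density_ilv[OF D D])
      then show ?thesis using density_unique[OF D] by simp
    qed
    show "\<delta> k (2 * t + 1) = 1/2 * \<delta> (k - 1) t + 1/2 * \<delta> (k + 1) (t + 1)" for k t
    proof -
      have "has_density (B k (2*t+1)) ((\<delta> (k-1) t + \<delta> (k+1) (t+1))/2)"
        unfolding B_odd by (rule density_ilv[OF D D])
      then show ?thesis using density_unique[OF D] by simp
    qed
  qed
qed


definition key :: "nat \<Rightarrow> nat \<Rightarrow> nat \<Rightarrow> nat \<times> nat" where
  "key L t n = (n mod 2^L, if n mod 2^L + t < 2^L then 0 else v2 (n div 2^L + 1))"

definition gk :: "nat \<Rightarrow> nat \<Rightarrow> nat \<times> nat \<Rightarrow> int" where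
  "gk L t p = (if fst p + t < 2^L then int (bsum (fst p + t)) - int (bsum (fst p))
     else int (bsum (fst p + t - 2^L)) + 1 - int (bsum (fst p)) - int (snd p))"

lemma diff_key:
  assumes t: "t < 2^L"
  shows "int (bsum (n + t)) - int (bsum n) = gk L t (key L t n)"
proof -
  define a where "a = n mod 2^L"
  define q where "q = n div 2^L"
  have a: "a < 2^L" unfolding a_def by simp
  have n: "n = a + 2^L*q" unfolding a_def q_def by simp
  show ?thesis
  proof (cases "a + t < 2^L")
    case True
    have e: "n + t = (a + t) + 2^L*q" using n by simp
    have "bsum (n+t) = bsum (a+t) + bsum q" unfolding e by (rule bsum_add_pow[OF True])
    moreover have "bsum n = bsum a + bsum q" unfolding n by (rule bsum_add_pow[OF a])
    ultimately show ?thesis using True unfolding gk_def key_def a_def[symmetric] by simp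
  next
    case False
    define c where "c = a + t - 2^L"
    have c: "c < 2^L" using a t False unfolding c_def by linarith
    have e: "n + t = c + 2^L*(q+1)" using n False unfolding c_def by (simp add: algebra_simps)
    have h1: "bsum (n+t) = bsum c + bsum (q+1)" unfolding e by (rule bsum_add_pow[OF c])
    have h2: "bsum n = bsum a + bsum q" unfolding n by (rule bsum_add_pow[OF a])
    define j where "j = v2 (q+1)"
    obtain m where m: "q + 1 = 2^j * (2*m+1)" using v2_decomp[of "q+1"] unfolding j_def by auto
    note s = bsum_split_v2[OF m]
    show ?thesis using False h1 h2 s unfolding gk_def key_def a_def[symmetric] q_def[symmetric] j_def[symmetric] c_def
      by simp
  qed
qed

lemma key_class_dyadic: "is_dyadic_class {m. key L t m = key L t n}"
proof -
  define a where "a = n mod 2^L"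
  have a: "a < 2^L" unfolding a_def by simp
  show ?thesis
  proof (cases "a + t < 2^L")
    case True
    have "{m. key L t m = key L t n} = {m. m mod 2^L = a}"
      using True unfolding key_def a_def by auto
    also have "\<dots> = range (\<lambda>x. a + 2^L*x)"
    proof (intro equalityI subsetI)
      fix m assume "m \<in> {m. m mod 2^L = a}"
      then have "m = a + 2^L*(m div 2^L)" using mod_mult_div_eq[of m "2^L"] by simp
      then show "m \<in> range (\<lambda>x. a + 2^L*x)" by blast
    next
      fix m assume "m \<in> range (\<lambda>x. a + 2^L*x)"
      then show "m \<in> {m. m mod 2^L = a}" using a by auto
    qed
    finally show ?thesis unfolding is_dyadic_class_def using a by blast
  next
    case False
    define j where "j = v2 (n div 2^L + 1)"
    have "{m. key L t m = key L t n} = {m. m mod 2^L = a \<and> v2 (m div 2^L + 1) = j}"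
      using False unfolding key_def a_def j_def by auto
    also have "\<dots> = range (\<lambda>m. (a + 2^L*(2^j-1)) + 2^(L+j+1)*m)" by (rule v2_class[OF a])
    finally show ?thesis unfolding is_dyadic_class_def using class_bound[OF a, of j] by blast
  qed
qed

lemma part1: "\<exists>P. partition_on UNIV P \<and> (\<forall>N\<in>P. is_dyadic_class N) \<and>
            (\<forall>k::int. \<exists>F. F \<subseteq> P \<and> finite F \<and> B k t = \<Union>F)"
proof -
  define L where "L = t"
  have tL: "t < 2^L" unfolding L_def by (rule less_exp)
  define cls where "cls n = {m. key L t m = key L t n}" for n
  define P where "P = range cls"
  have part: "partition_on UNIV P"
  proof (rule partition_onI)
    show "\<Union>P = UNIV" unfolding P_def cls_def by auto
    show "{} \<notin> P" unfolding P_def cls_def by auto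
    fix p q assume "p \<in> P" "q \<in> P" "p \<noteq> q"
    then show "disjnt p q" unfolding P_def cls_def disjnt_def by auto
  qed
  have dy: "\<forall>N\<in>P. is_dyadic_class N" unfolding P_def cls_def using key_class_dyadic by auto
  have fin: "\<exists>F. F \<subseteq> P \<and> finite F \<and> B k t = \<Union>F" for k
  proof (intro exI conjI)
    show "cls ` B k t \<subseteq> P" unfolding P_def by auto
    show "B k t = \<Union> (cls ` B k t)"
    proof (intro equalityI subsetI)
      fix n assume "n \<in> B k t" then show "n \<in> \<Union> (cls ` B k t)" unfolding cls_def by auto
    next
      fix m assume "m \<in> \<Union> (cls ` B k t)"
      then obtain n where n: "n \<in> B k t" "key L t m = key L t n" unfolding cls_def by auto
      then show "m \<in> B k t" using diff_key[OF tL, of m] diff_key[OF tL, of n] unfolding B_def by simp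
    qed
    define J where "J = 2^L + 1 + nat \<bar>k\<bar>"
    have sub: "key L t ` B k t \<subseteq> {..<2^L} \<times> {..J}"
    proof
      fix p assume "p \<in> key L t ` B k t"
      then obtain n where n: "n \<in> B k t" "p = key L t n" by auto
      have g: "gk L t p = k" using diff_key[OF tL, of n] n unfolding B_def by simp
      have "fst p < 2^L" using n unfolding key_def by simp
      moreover have "snd p \<le> J"
      proof (cases "fst p + t < 2^L")
        case True then show ?thesis using n unfolding key_def by simp
      next
        case False
        have c: "fst p + t - 2^L < 2^L" using tL \<open>fst p < 2^L\<close> by linarith
        have "bsum (fst p + t - 2^L) \<le> fst p + t - 2^L" by (rule bsum_le)
        then have "bsum (fst p + t - 2^L) < 2^L" using c by linarith
        then have "int (bsum (fst p + t - 2^L)) < int (2^L)" by (simp only: of_nat_less_iff)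
        then have "int (bsum (fst p + t - 2^L)) < 2^L" by simp
        moreover have g': "int (bsum (fst p + t - 2^L)) + 1 - int (bsum (fst p)) - int (snd p) = k"
          using g False unfolding gk_def by simp
        ultimately have "int (snd p) \<le> 2^L + 1 + \<bar>k\<bar>" by linarith
        moreover have "int J = 2^L + 1 + \<bar>k\<bar>" unfolding J_def by simp
        ultimately have "int (snd p) \<le> int J" by linarith
        then show ?thesis by (simp only: of_nat_le_iff)
      qed
      ultimately show "p \<in> {..<2^L} \<times> {..J}" by (cases p) auto
    qed
    have "cls ` B k t = (\<lambda>p. {m. key L t m = p}) ` (key L t ` B k t)"
      unfolding cls_def by (simp add: image_image)
    moreover have "finite (key L t ` B k t)" using sub by (rule finite_subset) simp
    ultimately show "finite (cls ` B k t)" by simp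
  qed
  show ?thesis using part dy fin by blast
qed


theorem lemma2p1:
  shows "(\<forall>t::nat. \<exists>P. partition_on UNIV P \<and> (\<forall>N\<in>P. is_dyadic_class N) \<and>
            (\<forall>k::int. \<exists>F. F \<subseteq> P \<and> finite F \<and> B k t = \<Union>F))
       \<and> (\<exists>\<delta> :: int \<Rightarrow> nat \<Rightarrow> real.
            (\<forall>k t. has_density (B k t) (\<delta> k t))
          \<and> (\<forall>k. \<delta> k 1 = (if k \<le> 1 then 2 powr (real_of_int k - 2) else 0))
          \<and> (\<forall>k t. t \<ge> 1 \<longrightarrow> \<delta> k (2 * t) = \<delta> k t)
          \<and> (\<forall>k t. t \<ge> 1 \<longrightarrow>
                \<delta> k (2 * t + 1) = 1/2 * \<delta> (k - 1) t + 1/2 * \<delta> (k + 1) (t + 1)))"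
  using part1 part2 by blast

end
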